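(* Let $(N,\langle\cdot,\cdot\rangle,\varphi)$ be a modified $H$-type group (see context) whose metric $\langle\cdot,\cdot\rangle$ is a nilsoliton. Then every trivial central extension of $N$ also admits a nilsoliton; that is, for every finite-dimensional real vector space $\mathfrak m$, the simply connected Lie group $\bar N$ with Lie algebra $\bar{\mathfrak n}=\mathfrak n\oplus\mathfrak m$, bracket $[u+a,w+b]=[u,w]$ ($u,w\in\mathfrak n$, $a,b\in\mathfrak m$), admits a left-invariant pseudo-Riemannian metric with nondegenerate center that is a nilsoliton.
   Context: Let $N$ be a 2-step nilpotent real Lie group with Lie algebra $\mathfrak n$, Lie bracket $[\cdot,\cdot]$ and center $\mathfrak z$, endowed with a left-invariant pseudo-Riemannian metric $\langle\cdot,\cdot\rangle$ for which $\mathfrak z$ is nondegenerate. Put $\mathfrak v=\mathfrak z^\perp$. For $z\in\mathfrak z$ define $j(z)\in\mathrm{End}(\mathfrak v)$ by $\langle [x,y],z\rangle=\langle y,j(z)x\rangle$ for all $x,y\in\mathfrak v$. Given a quadratic form $\varphi$ on $\mathfrak z$, $(N,\langle\cdot,\cdot\rangle,\varphi)$ is a modified $H$-type group if $j(z)^2=-\varphi(z)\,\mathrm{Id}_{\mathfrak v}$ for all $z\in\mathfrak z$. A left-invariant metric on a 2-step nilpotent Lie group with Lie algebra $\mathfrak g$ is a nilsoliton if there is $c\in\mathbb R$ such that $\mathrm{Rc}+c\,\mathrm{Id}_{\mathfrak g}$ is a derivation of $\mathfrak g$, where the Ricci operator $\mathrm{Rc}$ is defined by $\langle\mathrm{Rc}\,u,w\rangle=\mathrm{Ric}(u,w)$.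 *)

theory Defs
  imports "HOL-Analysis.Analysis"
begin

text \<open>Real Lie algebras are modelled on a finite-dimensional real vector space
(type of class euclidean_space; the euclidean inner product is used only to
define traces via an orthonormal basis). A left-invariant pseudo-Riemannian
metric on the simply connected Lie group is the same as a nondegenerate
symmetric bilinear form g on the Lie algebra.\<close>

definition lie_algebra :: "('a::real_vector \<Rightarrow> 'a \<Rightarrow> 'a) \<Rightarrow> bool" where
  "lie_algebra br \<longleftrightarrow> bilinear br \<and> (\<forall>x. br x x = 0) \<and>
     (\<forall>x y z. br x (br y z) + br y (br z x) + br z (br x y) = 0)"

definition two_step_nilpotent :: "('a::real_vector \<Rightarrow> 'a \<Rightarrow> 'a) \<Rightarrow> bool" where
  "two_step_nilpotent br \<longleftrightarrow> lie_algebra br \<and> (\<forall>x y z. br (br x y) z = 0) \<and>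
     (\<exists>x y. br x y \<noteq> 0)"

definition lie_center :: "('a::real_vector \<Rightarrow> 'a \<Rightarrow> 'a) \<Rightarrow> 'a set" where
  "lie_center br = {z. \<forall>x. br z x = 0}"

definition pr_metric :: "('a::real_vector \<Rightarrow> 'a \<Rightarrow> real) \<Rightarrow> bool" where
  "pr_metric g \<longleftrightarrow> bilinear g \<and> (\<forall>x y. g x y = g y x) \<and>
     (\<forall>x. (\<forall>y. g x y = 0) \<longrightarrow> x = 0)"

definition nondeg_on :: "('a::real_vector \<Rightarrow> 'a \<Rightarrow> real) \<Rightarrow> 'a set \<Rightarrow> bool" where
  "nondeg_on g S \<longleftrightarrow> (\<forall>x\<in>S. (\<forall>y\<in>S. g x y = 0) \<longrightarrow> x = 0)"

definition g_perp :: "('a::real_vector \<Rightarrow> 'a \<Rightarrow> real) \<Rightarrow> 'a set \<Rightarrow> 'a set" where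
  "g_perp g S = {x. \<forall>z\<in>S. g x z = 0}"

definition jmap :: "('a::real_vector \<Rightarrow> 'a \<Rightarrow> 'a) \<Rightarrow> ('a \<Rightarrow> 'a \<Rightarrow> real) \<Rightarrow> 'a \<Rightarrow> 'a \<Rightarrow> 'a" where
  "jmap br g z x = (THE w. w \<in> g_perp g (lie_center br) \<and>
      (\<forall>y\<in>g_perp g (lie_center br). g (br x y) z = g y w))"

definition quadratic_form_on :: "'a::real_vector set \<Rightarrow> ('a \<Rightarrow> real) \<Rightarrow> bool" where
  "quadratic_form_on S phi \<longleftrightarrow>
     (\<exists>B::'a \<Rightarrow> 'a \<Rightarrow> real. bilinear B \<and> (\<forall>x y. B x y = B y x) \<and> (\<forall>z\<in>S. phi z = B z z))"

definition modified_H_type ::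
  "('a::real_vector \<Rightarrow> 'a \<Rightarrow> 'a) \<Rightarrow> ('a \<Rightarrow> 'a \<Rightarrow> real) \<Rightarrow> ('a \<Rightarrow> real) \<Rightarrow> bool" where
  "modified_H_type br g phi \<longleftrightarrow>
     two_step_nilpotent br \<and> pr_metric g \<and> nondeg_on g (lie_center br) \<and>
     quadratic_form_on (lie_center br) phi \<and>
     (\<forall>z\<in>lie_center br. \<forall>x\<in>g_perp g (lie_center br).
        jmap br g z (jmap br g z x) = - (phi z) *\<^sub>R x)"

text \<open>Levi-Civita connection of a left-invariant metric (Koszul formula).\<close>
definition lc_conn :: "('a::real_vector \<Rightarrow> 'a \<Rightarrow> 'a) \<Rightarrow> ('a \<Rightarrow> 'a \<Rightarrow> real) \<Rightarrow> 'a \<Rightarrow> 'a \<Rightarrow> 'a" where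
  "lc_conn br g x y = (THE w. \<forall>z. g w z = (g (br x y) z - g (br y z) x + g (br z x) y) / 2)"

definition curv :: "('a::real_vector \<Rightarrow> 'a \<Rightarrow> 'a) \<Rightarrow> ('a \<Rightarrow> 'a \<Rightarrow> real) \<Rightarrow> 'a \<Rightarrow> 'a \<Rightarrow> 'a \<Rightarrow> 'a" where
  "curv br g x y z = lc_conn br g x (lc_conn br g y z) - lc_conn br g y (lc_conn br g x z)
      - lc_conn br g (br x y) z"

definition lin_trace :: "('a::euclidean_space \<Rightarrow> 'a) \<Rightarrow> real" where
  "lin_trace f = (\<Sum>b\<in>Basis. f b \<bullet> b)"

definition ricci :: "('a::euclidean_space \<Rightarrow> 'a \<Rightarrow> 'a) \<Rightarrow> ('a \<Rightarrow> 'a \<Rightarrow> real) \<Rightarrow> 'a \<Rightarrow> 'a \<Rightarrow> real" where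
  "ricci br g u w = lin_trace (\<lambda>x. curv br g x u w)"

definition ricci_op :: "('a::euclidean_space \<Rightarrow> 'a \<Rightarrow> 'a) \<Rightarrow> ('a \<Rightarrow> 'a \<Rightarrow> real) \<Rightarrow> 'a \<Rightarrow> 'a" where
  "ricci_op br g u = (THE v. \<forall>w. g v w = ricci br g u w)"

definition lie_derivation :: "('a::real_vector \<Rightarrow> 'a \<Rightarrow> 'a) \<Rightarrow> ('a \<Rightarrow> 'a) \<Rightarrow> bool" where
  "lie_derivation br D \<longleftrightarrow> linear D \<and> (\<forall>x y. D (br x y) = br (D x) y + br x (D y))"

definition nilsoliton :: "('a::euclidean_space \<Rightarrow> 'a \<Rightarrow> 'a) \<Rightarrow> ('a \<Rightarrow> 'a \<Rightarrow> real) \<Rightarrow> bool" where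
  "nilsoliton br g \<longleftrightarrow> (\<exists>c::real. lie_derivation br (\<lambda>u. ricci_op br g u + c *\<^sub>R u))"

definition trivial_ext :: "('a::real_vector \<Rightarrow> 'a \<Rightarrow> 'a) \<Rightarrow> ('a \<times> 'b::real_vector) \<Rightarrow> ('a \<times> 'b) \<Rightarrow> ('a \<times> 'b)" where
  "trivial_ext br p q = (br (fst p) (fst q), 0)"

end

theory Submission
  imports Defs
begin

lemma sum_Basis_prod_real:
  fixes f::"('a::euclidean_space*'b::euclidean_space) \<Rightarrow> real"
  shows "sum f Basis = sum (\<lambda>i. f (i, 0)) Basis + sum (\<lambda>i. f (0, i)) Basis"
proof -
  have "inj_on (\<lambda>u. (u::'a, 0::'b)) Basis" "inj_on (\<lambda>u. (0::'a, u::'b)) Basis"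
    by (auto intro!: inj_onI Pair_inject)
  thus ?thesis
    unfolding Basis_prod_def
    by (subst sum.union_disjoint) (auto simp: Basis_prod_def sum.reindex)
qed

lemma linear_functional_repr:
  fixes f :: "'a::euclidean_space \<Rightarrow> real"
  assumes "linear f"
  shows "f z = (\<Sum>b\<in>Basis. f b *\<^sub>R b) \<bullet> z"
proof -
  have "f z = f (\<Sum>b\<in>Basis. (z \<bullet> b) *\<^sub>R b)" by (simp add: euclidean_representation)
  also have "\<dots> = (\<Sum>b\<in>Basis. (z \<bullet> b) * f b)"
    using assms by (simp add: linear_sum linear_scale)
  also have "\<dots> = (\<Sum>b\<in>Basis. f b *\<^sub>R b) \<bullet> z"
    by (simp add: inner_sum_right inner_commute mult.commute)
  finally show ?thesis .
qed

lemma pr_repr: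
  fixes g :: "'a::euclidean_space \<Rightarrow> 'a \<Rightarrow> real"
  assumes pg: "pr_metric g" and lf: "linear f"
  shows "\<exists>!w. \<forall>z. g w z = f z"
proof -
  have bg: "bilinear g" and nd: "\<And>x. (\<forall>y. g x y = 0) \<Longrightarrow> x = 0"
    using pg unfolding pr_metric_def by auto
  define T where "T w = (\<Sum>b\<in>Basis. g w b *\<^sub>R b)" for w
  have lin1: "linear (\<lambda>z. g w z)" for w using bg unfolding bilinear_def by auto
  have lin2: "linear (\<lambda>w. g w z)" for z using bg unfolding bilinear_def by auto
  have gT: "g w z = T w \<bullet> z" for w z
    unfolding T_def by (rule linear_functional_repr[OF lin1])
  have linT: "linear T"
    by (rule linearI) (simp_all add: T_def bilinear_ladd[OF bg] bilinear_lmul[OF bg]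
        scaleR_add_left sum.distrib scaleR_sum_right)
  have injT: "inj T"
  proof (rule linear_injective_0[OF linT, THEN iffD2], intro allI impI)
    fix w assume "T w = 0"
    then have "\<forall>y. g w y = 0" by (simp add: gT)
    then show "w = 0" by (rule nd)
  qed
  have "surj T" using linT injT by (simp add: linear_injective_imp_surjective)
  then have "\<exists>w. (\<Sum>b\<in>Basis. f b *\<^sub>R b) = T w" by (rule surjD)
  then obtain w where w0: "(\<Sum>b\<in>Basis. f b *\<^sub>R b) = T w" by (elim exE)
  have w: "T w = (\<Sum>b\<in>Basis. f b *\<^sub>R b)" using w0 by simp
  have ex: "\<forall>z. g w z = f z"
    using w gT linear_functional_repr[OF lf] by metis
  show ?thesis
  proof (rule ex1I[of _ w])
    show "\<forall>z. g w z = f z" by (rule ex)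
  next
    fix w' assume "\<forall>z. g w' z = f z"
    then have "\<forall>z. g (w' - w) z = 0" using ex bg by (simp add: bilinear_lsub)
    then show "w' = w" using nd by fastforce
  qed
qed

lemma the_unique_repr:
  assumes pg: "pr_metric G" and h: "\<forall>z. G w z = f z"
  shows "(THE w. \<forall>z. G w z = f z) = w"
proof (rule the_equality)
  show "\<forall>z. G w z = f z" by (rule h)
next
  fix w' assume h': "\<forall>z. G w' z = f z"
  have bg: "bilinear G" and nd: "\<And>x. (\<forall>y. G x y = 0) \<Longrightarrow> x = 0"
    using pg unfolding pr_metric_def by auto
  have "\<forall>z. G (w' - w) z = 0" using h h' by (simp add: bilinear_lsub[OF bg])
  then show "w' = w" using nd by fastforce
qed

definition kos :: "('a::real_vector \<Rightarrow> 'a \<Rightarrow> 'a) \<Rightarrow> ('a \<Rightarrow> 'a \<Rightarrow> real) \<Rightarrow> 'a \<Rightarrow> 'a \<Rightarrow> 'a \<Rightarrow> real" where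
  "kos br g x y z = (g (br x y) z - g (br y z) x + g (br z x) y) / 2"

lemma kos_lin_z:
  assumes bb: "bilinear br" and bg: "bilinear g"
  shows "linear (kos br g x y)"
  by (rule linearI) (simp_all add: kos_def bilinear_ladd[OF bg] bilinear_radd[OF bg]
      bilinear_lmul[OF bg] bilinear_rmul[OF bg] bilinear_ladd[OF bb] bilinear_radd[OF bb]
      bilinear_lmul[OF bb] bilinear_rmul[OF bb] field_simps)

lemma kos_add_y:
  assumes bb: "bilinear br" and bg: "bilinear g"
  shows "kos br g x (y1 + y2) z = kos br g x y1 z + kos br g x y2 z"
  by (simp add: kos_def bilinear_ladd[OF bg] bilinear_radd[OF bg]
      bilinear_ladd[OF bb] bilinear_radd[OF bb] field_simps)

lemma kos_scale_y:
  assumes bb: "bilinear br" and bg: "bilinear g"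
  shows "kos br g x (r *\<^sub>R y) z = r * kos br g x y z"
  by (simp add: kos_def bilinear_lmul[OF bg] bilinear_rmul[OF bg]
      bilinear_lmul[OF bb] bilinear_rmul[OF bb] field_simps)

lemma lc_spec:
  fixes br :: "'a::euclidean_space \<Rightarrow> 'a \<Rightarrow> 'a"
  assumes bb: "bilinear br" and pg: "pr_metric g"
  shows "g (lc_conn br g x y) z = kos br g x y z"
proof -
  have bg: "bilinear g" using pg unfolding pr_metric_def by auto
  have "\<exists>!w. \<forall>z. g w z = kos br g x y z" by (rule pr_repr[OF pg kos_lin_z[OF bb bg]])
  then have "\<forall>z. g (THE w. \<forall>z. g w z = kos br g x y z) z = kos br g x y z" by (rule theI')
  then show ?thesis unfolding lc_conn_def kos_def by simp
qed

lemma lc_eq: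
  fixes br :: "'a::euclidean_space \<Rightarrow> 'a \<Rightarrow> 'a"
  assumes pg: "pr_metric g" and h: "\<forall>z. g w z = kos br g x y z"
  shows "lc_conn br g x y = w"
  unfolding lc_conn_def using the_unique_repr[OF pg h] by (simp add: kos_def)

lemma lc_add:
  fixes br :: "'a::euclidean_space \<Rightarrow> 'a \<Rightarrow> 'a"
  assumes bb: "bilinear br" and pg: "pr_metric g"
  shows "lc_conn br g x (y1 + y2) = lc_conn br g x y1 + lc_conn br g x y2"
proof -
  have bg: "bilinear g" using pg unfolding pr_metric_def by auto
  show ?thesis
    by (rule lc_eq[OF pg]) (simp add: bilinear_ladd[OF bg] lc_spec[OF bb pg] kos_add_y[OF bb bg])
qed

lemma lc_scale:
  fixes br :: "'a::euclidean_space \<Rightarrow> 'a \<Rightarrow> 'a"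
  assumes bb: "bilinear br" and pg: "pr_metric g"
  shows "lc_conn br g x (r *\<^sub>R y) = r *\<^sub>R lc_conn br g x y"
proof -
  have bg: "bilinear g" using pg unfolding pr_metric_def by auto
  show ?thesis
    by (rule lc_eq[OF pg]) (simp add: bilinear_lmul[OF bg] lc_spec[OF bb pg] kos_scale_y[OF bb bg])
qed

lemma curv_add:
  fixes br :: "'a::euclidean_space \<Rightarrow> 'a \<Rightarrow> 'a"
  assumes bb: "bilinear br" and pg: "pr_metric g"
  shows "curv br g x y (z1 + z2) = curv br g x y z1 + curv br g x y z2"
  by (simp add: curv_def lc_add[OF bb pg] algebra_simps)

lemma curv_scale:
  fixes br :: "'a::euclidean_space \<Rightarrow> 'a \<Rightarrow> 'a"
  assumes bb: "bilinear br" and pg: "pr_metric g"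
  shows "curv br g x y (r *\<^sub>R z) = r *\<^sub>R curv br g x y z"
  by (simp add: curv_def lc_scale[OF bb pg] algebra_simps)

lemma ricci_lin:
  fixes br :: "'a::euclidean_space \<Rightarrow> 'a \<Rightarrow> 'a"
  assumes bb: "bilinear br" and pg: "pr_metric g"
  shows "linear (ricci br g u)"
  by (rule linearI) (simp_all add: ricci_def lin_trace_def curv_add[OF bb pg]
      curv_scale[OF bb pg] inner_add_left sum.distrib sum_distrib_left)

lemma ricci_op_spec:
  fixes br :: "'a::euclidean_space \<Rightarrow> 'a \<Rightarrow> 'a"
  assumes bb: "bilinear br" and pg: "pr_metric g"
  shows "g (ricci_op br g u) w = ricci br g u w"
proof -
  have "\<exists>!v. \<forall>w. g v w = ricci br g u w" by (rule pr_repr[OF pg ricci_lin[OF bb pg]])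
  then have "\<forall>w. g (THE v. \<forall>w. g v w = ricci br g u w) w = ricci br g u w" by (rule theI')
  then show ?thesis unfolding ricci_op_def by simp
qed


definition gprod :: "('a::euclidean_space \<Rightarrow> 'a \<Rightarrow> real) \<Rightarrow> ('a \<times> 'b::euclidean_space) \<Rightarrow> ('a \<times> 'b) \<Rightarrow> real" where
  "gprod g p q = g (fst p) (fst q) + snd p \<bullet> snd q"

lemma gprod_pr:
  fixes g :: "'a::euclidean_space \<Rightarrow> 'a \<Rightarrow> real"
  assumes pg: "pr_metric g"
  shows "pr_metric (gprod g :: ('a \<times> 'b::euclidean_space) \<Rightarrow> _)"
proof -
  have bg: "bilinear g" and sg: "\<And>x y. g x y = g y x" and nd: "\<And>x. (\<forall>y. g x y = 0) \<Longrightarrow> x = 0"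
    using pg unfolding pr_metric_def by auto
  have "bilinear (gprod g :: ('a \<times> 'b::euclidean_space) \<Rightarrow> _)"
    unfolding bilinear_def
    by (auto intro!: linearI simp: gprod_def bilinear_ladd[OF bg] bilinear_radd[OF bg]
        bilinear_lmul[OF bg] bilinear_rmul[OF bg] inner_add_left inner_add_right algebra_simps)
  moreover have "\<forall>x y. gprod g x y = (gprod g y x :: real)"
    by (simp add: gprod_def sg inner_commute)
  moreover have "\<forall>x::'a \<times> 'b. (\<forall>y. gprod g x y = 0) \<longrightarrow> x = 0"
  proof (intro allI impI)
    fix x :: "'a \<times> 'b" assume h: "\<forall>y. gprod g x y = 0"
    have "\<forall>w. g (fst x) w = 0"
    proof
      fix w show "g (fst x) w = 0" using h[rule_format, of "(w, 0)"] by (simp add: gprod_def)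
    qed
    then have f0: "fst x = 0" by (rule nd)
    have "snd x \<bullet> snd x = 0" using h[rule_format, of "(0, snd x)"] f0
      by (simp add: gprod_def bilinear_lzero[OF bg])
    then have "snd x = 0" by simp
    with f0 show "x = 0" by (simp add: prod_eq_iff)
  qed
  ultimately show ?thesis unfolding pr_metric_def by blast
qed

lemma center_ext:
  "p \<in> lie_center (trivial_ext br) \<longleftrightarrow> fst p \<in> lie_center br"
  unfolding lie_center_def trivial_ext_def by (auto simp: prod_eq_iff)

lemma lc_ext:
  fixes br :: "'a::euclidean_space \<Rightarrow> 'a \<Rightarrow> 'a"
  assumes bb: "bilinear br" and pg: "pr_metric g"
  shows "lc_conn (trivial_ext br) (gprod g :: ('a \<times> 'b::euclidean_space) \<Rightarrow> _) p q
       = (lc_conn br g (fst p) (fst q), 0)"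
  by (rule lc_eq[OF gprod_pr[OF pg]])
     (simp add: gprod_def lc_spec[OF bb pg] kos_def trivial_ext_def)

lemma curv_ext:
  fixes br :: "'a::euclidean_space \<Rightarrow> 'a \<Rightarrow> 'a"
  assumes bb: "bilinear br" and pg: "pr_metric g"
  shows "curv (trivial_ext br) (gprod g :: ('a \<times> 'b::euclidean_space) \<Rightarrow> _) p q r
       = (curv br g (fst p) (fst q) (fst r), 0)"
  by (simp add: curv_def lc_ext[OF bb pg] trivial_ext_def)

lemma ricci_ext:
  fixes br :: "'a::euclidean_space \<Rightarrow> 'a \<Rightarrow> 'a"
  assumes bb: "bilinear br" and pg: "pr_metric g"
  shows "ricci (trivial_ext br) (gprod g :: ('a \<times> 'b::euclidean_space) \<Rightarrow> _) p q
       = ricci br g (fst p) (fst q)"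
  unfolding ricci_def lin_trace_def
  by (subst sum_Basis_prod_real) (simp add: curv_ext[OF bb pg] inner_prod_def)

lemma ricci_op_ext:
  fixes br :: "'a::euclidean_space \<Rightarrow> 'a \<Rightarrow> 'a"
  assumes bb: "bilinear br" and pg: "pr_metric g"
  shows "ricci_op (trivial_ext br) (gprod g :: ('a \<times> 'b::euclidean_space) \<Rightarrow> _) p
       = (ricci_op br g (fst p), 0)"
  unfolding ricci_op_def[of "trivial_ext br"]
  by (rule the_unique_repr[OF gprod_pr[OF pg]])
     (simp add: gprod_def ricci_op_spec[OF bb pg] ricci_ext[OF bb pg])

theorem corollary4p12:
  fixes br :: "'a::euclidean_space \<Rightarrow> 'a \<Rightarrow> 'a"
    and g :: "'a \<Rightarrow> 'a \<Rightarrow> real"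
    and phi :: "'a \<Rightarrow> real"
  assumes "modified_H_type br g phi"
    and "nilsoliton br g"
  shows "\<exists>g' :: ('a \<times> 'b::euclidean_space) \<Rightarrow> ('a \<times> 'b) \<Rightarrow> real.
           pr_metric g' \<and> nondeg_on g' (lie_center (trivial_ext br)) \<and>
           nilsoliton (trivial_ext br) g'"
proof -
  have pg: "pr_metric g" and ndc: "nondeg_on g (lie_center br)" and bb: "bilinear br"
    using assms(1) unfolding modified_H_type_def two_step_nilpotent_def lie_algebra_def by auto
  have bg: "bilinear g" using pg unfolding pr_metric_def by auto
  obtain c where D: "lie_derivation br (\<lambda>u. ricci_op br g u + c *\<^sub>R u)"
    using assms(2) unfolding nilsoliton_def by blast
  let ?D = "\<lambda>u. ricci_op br g u + c *\<^sub>R u"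
  have linD: "linear ?D" and derD: "\<And>x y. ?D (br x y) = br (?D x) y + br x (?D y)"
    using D unfolding lie_derivation_def by auto
  have radd: "ricci_op br g (x + y) = ricci_op br g x + ricci_op br g y" for x y
    using linear_add[OF linD, of x y] by (simp add: algebra_simps)
  have rscale: "ricci_op br g (r *\<^sub>R x) = r *\<^sub>R ricci_op br g x" for r x
    using linear_scale[OF linD, of r x] by (simp add: algebra_simps)
  define G where "G = (gprod g :: ('a \<times> 'b) \<Rightarrow> _)"
  have pG: "pr_metric G" unfolding G_def by (rule gprod_pr[OF pg])
  have ndG: "nondeg_on G (lie_center (trivial_ext br))"
    unfolding nondeg_on_def
  proof (intro ballI impI)
    fix x :: "'a \<times> 'b" assume xc: "x \<in> lie_center (trivial_ext br)"
      and h: "\<forall>y\<in>lie_center (trivial_ext br). G x y = 0"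
    have fxc: "fst x \<in> lie_center br" using xc center_ext by blast
    have "\<forall>w\<in>lie_center br. g (fst x) w = 0"
    proof
      fix w assume "w \<in> lie_center br"
      then have "(w, 0::'b) \<in> lie_center (trivial_ext br)" using center_ext by fastforce
      then show "g (fst x) w = 0" using h by (auto simp: G_def gprod_def)
    qed
    then have f0: "fst x = 0" using ndc fxc unfolding nondeg_on_def by blast
    have "(0::'a, snd x) \<in> lie_center (trivial_ext br)"
      using center_ext[of "(0::'a, snd x)" br] bilinear_lzero[OF bb] by (simp add: lie_center_def)
    then have "G x (0, snd x) = 0" using h by blast
    then have "snd x \<bullet> snd x = 0" using f0 by (simp add: G_def gprod_def bilinear_lzero[OF bg])
    then have "snd x = 0" by simp
    with f0 show "x = 0" by (simp add: prod_eq_iff)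
  qed
  have Dext: "ricci_op (trivial_ext br) G p + c *\<^sub>R p = (?D (fst p), c *\<^sub>R snd p)" for p
    unfolding G_def by (simp add: ricci_op_ext[OF bb pg] prod_eq_iff)
  have "lie_derivation (trivial_ext br) (\<lambda>u. ricci_op (trivial_ext br) G u + c *\<^sub>R u)"
    unfolding lie_derivation_def Dext
  proof (intro conjI allI)
    show "linear (\<lambda>p. (?D (fst p), c *\<^sub>R snd p))"
      by (rule linearI) (simp_all add: radd rscale scaleR_add_right)
  next
    fix x y :: "'a \<times> 'b"
    show "(?D (fst (trivial_ext br x y)), c *\<^sub>R snd (trivial_ext br x y)) =
      trivial_ext br (?D (fst x), c *\<^sub>R snd x) y + trivial_ext br x (?D (fst y), c *\<^sub>R snd y)"
      using derD[of "fst x" "fst y"] by (simp add: trivial_ext_def)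
  qed
  then have "nilsoliton (trivial_ext br) G" unfolding nilsoliton_def by blast
  with pG ndG show ?thesis by blast
qed

end
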